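(* Let $A$ be an integral domain with fraction field $K$, and let $U$ and $A^{\operatorname{ua}}$ be as in the context. Then $[1]^{\mathrm{reg}(A)}_A = [1]^{A^\circ}_A = \mathbb{Z}\langle U \rangle = U \cup \{0\}$, and therefore $A^{\operatorname{ua}} = ([1]^{\mathrm{reg}(A)}_A \setminus \{0\})^{-1}A$. Moreover, $[1]^{\mathrm{reg}(A)}_A=A$ if and only if $K$ is the only unit-additive overring of $A$.
   Context: A commutative ring is unit-additive if for all units $u,v$, $u+v$ is a unit or nilpotent. For the domain $A$, $\mathrm{reg}(A)=A^\circ=A\setminus\{0\}$. Define $W_0=\{1\}$, $V_0=A^\times$, and for $i\ge1$ let $W_i$ be the set of nonzero finite sums of elements of $V_{i-1}$ and $V_i=\{x\in A\mid ax\in W_i\text{ for some nonzero } a\in A\}$; set $U=\bigcup_i V_i$. It is known that $U$ is a saturated multiplicative set closed under nonzero sums and that $A^{\operatorname{ua}}:=U^{-1}A$ is the unique smallest unit-additive overring of $A$ (the unit-additive closure). For $T\subseteq A$, $[1]^T_A$ is the smallest additive subgroup $F$ of $A$ containing $1$ such that $ta\in F$ with $t\in T$, $a\in A$ implies $a\in F$. $\mathbb{Z}\langle U\rangle$ is the subring of $A$ generated by $U$. *)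

theory Defs
  imports "HOL-Computational_Algebra.Fraction_Field"
begin

text \<open>The domain A is the type 'a (class idom); its fraction field K is 'a fract,
  with A embedded via the canonical map a |-> Fract a 1.\<close>

abbreviation emb :: "'a::idom \<Rightarrow> 'a fract" where
  "emb a \<equiv> Fract a 1"

definition reg :: "'a::idom set" where
  "reg = {a. \<forall>b. a * b = 0 \<longrightarrow> b = 0}"

fun Vset :: "nat \<Rightarrow> 'a::idom set" where
  "Vset 0 = {x. x dvd 1}"
| "Vset (Suc i) =
     {x. \<exists>a. a \<noteq> 0 \<and>
        a * x \<in> {s. s \<noteq> 0 \<and> (\<exists>xs. xs \<noteq> [] \<and> set xs \<subseteq> Vset i \<and> s = sum_list xs)}}"

definition Wset :: "nat \<Rightarrow> 'a::idom set" where
  "Wset i = (if i = 0 then {1}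
             else {s. s \<noteq> 0 \<and> (\<exists>xs. xs \<noteq> [] \<and> set xs \<subseteq> Vset (i - 1) \<and> s = sum_list xs)})"

definition Uset :: "'a::idom set" where
  "Uset = (\<Union>i. Vset i)"

definition add_subgroup :: "'a::comm_ring_1 set \<Rightarrow> bool" where
  "add_subgroup F \<longleftrightarrow> 0 \<in> F \<and> (\<forall>x\<in>F. \<forall>y\<in>F. x + y \<in> F) \<and> (\<forall>x\<in>F. - x \<in> F)"

definition subring :: "'a::comm_ring_1 set \<Rightarrow> bool" where
  "subring B \<longleftrightarrow> 1 \<in> B \<and> add_subgroup B \<and> (\<forall>x\<in>B. \<forall>y\<in>B. x * y \<in> B)"

definition bracket1 :: "'a::comm_ring_1 set \<Rightarrow> 'a set" where
  "bracket1 T = \<Inter>{F. add_subgroup F \<and> 1 \<in> F \<and> (\<forall>t\<in>T. \<forall>a. t * a \<in> F \<longrightarrow> a \<in> F)}"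

definition ring_gen :: "'a::comm_ring_1 set \<Rightarrow> 'a set" where
  "ring_gen S = \<Inter>{B. subring B \<and> S \<subseteq> B}"

definition loc :: "'a::idom set \<Rightarrow> 'a fract set" where
  "loc S = {Fract a s | a s. s \<in> S}"

definition ua_closure :: "'a::idom fract set" where
  "ua_closure = loc Uset"

definition unit_in :: "'a::comm_ring_1 set \<Rightarrow> 'a \<Rightarrow> bool" where
  "unit_in B u \<longleftrightarrow> u \<in> B \<and> (\<exists>w\<in>B. u * w = 1)"

definition unit_additive :: "'a::comm_ring_1 set \<Rightarrow> bool" where
  "unit_additive B \<longleftrightarrow> (\<forall>u v. unit_in B u \<and> unit_in B v \<longrightarrow>
      unit_in B (u + v) \<or> (\<exists>n. (u + v) ^ n = 0))"

definition overring :: "'a::idom fract set \<Rightarrow> bool" where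
  "overring B \<longleftrightarrow> subring B \<and> range emb \<subseteq> B"

end

theory Submission
  imports Defs
begin

lemma V_nz: "x \<in> Vset i \<Longrightarrow> x \<noteq> (0::'a::idom)"
  by (cases i) auto

lemma V_Suc_iff: "x \<in> Vset (Suc i) \<longleftrightarrow> (\<exists>a xs. a \<noteq> 0 \<and> a * x \<noteq> 0 \<and> xs \<noteq> [] \<and> set xs \<subseteq> Vset i \<and> a * x = sum_list xs)"
  by auto

lemma V_sat: "t \<noteq> 0 \<Longrightarrow> t * x \<in> Vset i \<Longrightarrow> (x::'a::idom) \<in> Vset (Suc i)"
  unfolding V_Suc_iff
  by (rule exI[of _ t], rule exI[of _ "[t * x]"]) (auto dest: V_nz)

lemma V_mono: "Vset i \<subseteq> (Vset (Suc i) :: 'a::idom set)"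
  using V_sat[of 1] by auto

lemma V_mono_le: "i \<le> j \<Longrightarrow> Vset i \<subseteq> (Vset j :: 'a::idom set)"
  using V_mono by (rule lift_Suc_mono_le)

lemma V0_mult: "u dvd 1 \<Longrightarrow> y \<in> Vset j \<Longrightarrow> u * y \<in> (Vset j :: 'a::idom set)"
proof (induction j arbitrary: y)
  case 0 then show ?case using mult_dvd_mono[of u 1 y 1] by simp
next
  case (Suc j)
  then obtain a xs where h: "a \<noteq> 0" "a * y \<noteq> 0" "xs \<noteq> []" "set xs \<subseteq> Vset j" "a * y = sum_list xs"
    unfolding V_Suc_iff by blast
  have u0: "u \<noteq> 0" using Suc.prems by auto
  have "a * (u * y) = sum_list (map ((*) u) xs)"
    using h(5) by (simp add: sum_list_const_mult mult.left_commute)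
  moreover have "a * (u * y) \<noteq> 0" by (metis h(2) u0 mult.left_commute mult_eq_0_iff)
  moreover have "set (map ((*) u) xs) \<subseteq> Vset j" using h(4) Suc.IH Suc.prems by auto
  ultimately show ?case unfolding V_Suc_iff using h(1,3)
    by (intro exI[of _ a] exI[of _ "map ((*) u) xs"]) simp
qed

lemma V_mult: "x \<in> Vset i \<Longrightarrow> y \<in> Vset j \<Longrightarrow> x * y \<in> (Vset (i + j) :: 'a::idom set)"
proof (induction i arbitrary: x)
  case 0 then show ?case using V0_mult by auto
next
  case (Suc i)
  then obtain a xs where h: "a \<noteq> 0" "a * x \<noteq> 0" "xs \<noteq> []" "set xs \<subseteq> Vset i" "a * x = sum_list xs"
    unfolding V_Suc_iff by blast
  have y0: "y \<noteq> 0" using Suc.prems V_nz by blast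
  have "a * (x * y) = sum_list (map (\<lambda>z. z * y) xs)"
    using h(5) by (simp add: sum_list_mult_const mult.assoc[symmetric])
  moreover have "a * (x * y) \<noteq> 0" by (metis h(2) y0 mult.assoc mult_eq_0_iff)
  moreover have "set (map (\<lambda>z. z * y) xs) \<subseteq> Vset (i + j)" using h(4) Suc.IH Suc.prems by auto
  ultimately show ?case unfolding add_Suc V_Suc_iff using h(1,3)
    by (intro exI[of _ a] exI[of _ "map (\<lambda>z. z * y) xs"]) simp
qed

lemma U_iff: "x \<in> Uset \<longleftrightarrow> (\<exists>i. x \<in> Vset i)"
  by (simp add: Uset_def)

lemma U_nz: "x \<in> Uset \<Longrightarrow> x \<noteq> (0::'a::idom)"
  unfolding U_iff by (auto dest: V_nz)

lemma U_mult: "x \<in> Uset \<Longrightarrow> y \<in> Uset \<Longrightarrow> x * y \<in> (Uset :: 'a::idom set)"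
  unfolding U_iff by (auto dest: V_mult)

lemma U_sat: "t \<noteq> 0 \<Longrightarrow> t * x \<in> Uset \<Longrightarrow> (x::'a::idom) \<in> Uset"
  unfolding U_iff by (auto dest: V_sat)

lemma U_unit: "u dvd 1 \<Longrightarrow> (u::'a::idom) \<in> Uset"
  unfolding U_iff by (rule exI[of _ 0]) simp

lemma U_add: "x \<in> Uset \<Longrightarrow> y \<in> Uset \<Longrightarrow> x + y \<noteq> 0 \<Longrightarrow> x + y \<in> (Uset :: 'a::idom set)"
proof -
  assume "x \<in> Uset" "y \<in> Uset" and nz: "x + y \<noteq> 0"
  then obtain i j where "x \<in> Vset i" "y \<in> Vset j" unfolding U_iff by blast
  moreover have "Vset i \<subseteq> Vset (max i j)" "Vset j \<subseteq> Vset (max i j)"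
    by (rule V_mono_le, simp)+
  ultimately have xy: "x \<in> Vset (max i j)" "y \<in> Vset (max i j)" by blast+
  have "set [x, y] \<subseteq> Vset (max i j)" using xy by simp
  then have "x + y \<in> Vset (Suc (max i j))" unfolding V_Suc_iff using nz
    by (intro exI[of _ 1] exI[of _ "[x, y]"]) simp
  then show ?thesis unfolding U_iff by blast
qed

lemma sum_list_in: "add_subgroup F \<Longrightarrow> set xs \<subseteq> F \<Longrightarrow> sum_list xs \<in> F"
  by (induction xs) (auto simp: add_subgroup_def)

lemma U0_good: "add_subgroup (Uset \<union> {0::'a::idom})"
  unfolding add_subgroup_def
proof (intro conjI ballI)
  fix x y :: 'a assume "x \<in> Uset \<union> {0}" "y \<in> Uset \<union> {0}"
  then show "x + y \<in> Uset \<union> {0}" using U_add by (cases "x + y = 0") auto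
next
  fix x :: 'a assume "x \<in> Uset \<union> {0}"
  moreover have "- 1 \<in> (Uset :: 'a set)" by (rule U_unit) simp
  ultimately show "- x \<in> Uset \<union> {0}" using U_mult[of "-1" x] by auto
qed simp

lemma U0_subring: "subring (Uset \<union> {0::'a::idom})"
  unfolding subring_def using U0_good U_unit[of 1] U_mult by auto

lemma reg_eq: "(reg :: 'a::idom set) = - {0}"
  unfolding reg_def by (auto, metis mult_zero_left zero_neq_one)

lemma bracket_eq: "bracket1 (- {0 :: 'a::idom}) = Uset \<union> {0}"
proof
  have "Uset \<union> {0} \<in> {F. add_subgroup F \<and> 1 \<in> F \<and> (\<forall>t\<in>- {0::'a}. \<forall>a. t * a \<in> F \<longrightarrow> a \<in> F)}"
    using U0_good U_unit[of 1] U_sat by auto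
  then show "bracket1 (- {0 :: 'a}) \<subseteq> Uset \<union> {0}"
    unfolding bracket1_def by (rule Inter_lower)
next
  show "Uset \<union> {0} \<subseteq> bracket1 (- {0 :: 'a})"
    unfolding bracket1_def
  proof (rule Inter_greatest, safe)
    fix F :: "'a set"
    assume F: "add_subgroup F" "1 \<in> F" "\<forall>t\<in>- {0}. \<forall>a. t * a \<in> F \<longrightarrow> a \<in> F"
    show "0 \<in> F" using F(1) by (simp add: add_subgroup_def)
    have "Vset i \<subseteq> F" for i
    proof (induction i)
      case 0
      show ?case
      proof
        fix u :: 'a assume "u \<in> Vset 0"
        then obtain w where "1 = u * w" by auto
        then have "w * u \<in> F" "w \<noteq> 0" using F(2) by (auto simp: mult.commute)
        then show "u \<in> F" using F(3) by auto
      qed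
    next
      case (Suc i)
      show ?case
      proof
        fix x :: 'a assume "x \<in> Vset (Suc i)"
        then obtain a xs where h: "a \<noteq> 0" "set xs \<subseteq> Vset i" "a * x = sum_list xs"
          unfolding V_Suc_iff by blast
        have "a * x \<in> F" using h sum_list_in[OF F(1)] Suc.IH by auto
        then show "x \<in> F" using F(3) h(1) by auto
      qed
    qed
    then show "x \<in> Uset \<Longrightarrow> x \<in> F" for x :: 'a unfolding U_iff by blast
  qed
qed

lemma ring_gen_eq: "ring_gen (Uset :: 'a::idom set) = Uset \<union> {0}"
proof
  show "ring_gen Uset \<subseteq> Uset \<union> {0::'a}"
    unfolding ring_gen_def by (rule Inter_lower) (use U0_subring in auto)
  show "Uset \<union> {0::'a} \<subseteq> ring_gen Uset"
    unfolding ring_gen_def subring_def add_subgroup_def by blast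
qed

lemma ua_eq: "(ua_closure :: 'a::idom fract set) = loc (bracket1 (reg :: 'a set) - {0})"
proof -
  have "bracket1 (reg :: 'a set) - {0} = Uset" using U_nz by (auto simp: reg_eq bracket_eq)
  then show ?thesis by (simp add: ua_closure_def)
qed

lemma emb_add: "Fract (a + b) 1 = Fract a 1 + Fract (b::'a::idom) 1"
  by simp

lemma emb_sum_list: "Fract (sum_list xs) 1 = sum_list (map (\<lambda>x. Fract x 1) (xs :: 'a::idom list))"
  by (induction xs) (simp_all only: emb_add list.map sum_list.Cons sum_list.Nil Zero_fract_def)

lemma emb_mult: "Fract (a * b) 1 = Fract a 1 * Fract (b::'a::idom) 1"
  by simp

lemma emb_eq0: "Fract (a::'a::idom) 1 = 0 \<longleftrightarrow> a = 0"
  by (simp add: Zero_fract_def eq_fract)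

lemma sum_units:
  fixes B :: "'a::idom fract set"
  assumes B: "subring B" "unit_additive B"
  shows "xs \<noteq> [] \<Longrightarrow> (\<forall>x\<in>set xs. unit_in B x) \<Longrightarrow> sum_list xs = 0 \<or> unit_in B (sum_list xs)"
proof (induction xs)
  case Nil then show ?case by simp
next
  case (Cons x xs)
  show ?case
  proof (cases "xs = []")
    case True then show ?thesis using Cons by simp
  next
    case False
    have ux: "unit_in B x" using Cons by simp
    have "sum_list xs = 0 \<or> unit_in B (sum_list xs)" using Cons False by simp
    then show ?thesis
    proof
      assume "sum_list xs = 0" then show ?thesis using ux by simp
    next
      assume "unit_in B (sum_list xs)"
      then have "unit_in B (x + sum_list xs) \<or> (\<exists>n. (x + sum_list xs) ^ n = 0)"
        using B(2) ux unfolding unit_additive_def by blast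
      then show ?thesis by auto
    qed
  qed
qed

lemma fwd:
  fixes B :: "'a::idom fract set"
  assumes U: "Uset \<union> {0::'a} = UNIV" and B: "overring B" "unit_additive B"
  shows "B = UNIV"
proof -
  have sr: "subring B" and emb: "\<And>a. Fract a 1 \<in> B" using B(1) unfolding overring_def by auto
  have mulB: "\<And>x y. x \<in> B \<Longrightarrow> y \<in> B \<Longrightarrow> x * y \<in> B" using sr unfolding subring_def by auto
  have V: "\<And>x. x \<in> Vset i \<Longrightarrow> unit_in B (Fract x 1)" for i
  proof (induction i)
    case 0
    fix x :: 'a assume "x \<in> Vset 0"
    then obtain w where "1 = x * w" by auto
    then have "Fract x 1 * Fract w 1 = 1" by (simp add: One_fract_def)
    then show "unit_in B (Fract x 1)" unfolding unit_in_def using emb by blast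
  next
    case (Suc i)
    fix x :: 'a assume "x \<in> Vset (Suc i)"
    then obtain a xs where h: "a \<noteq> 0" "a * x \<noteq> 0" "xs \<noteq> []" "set xs \<subseteq> Vset i" "a * x = sum_list xs"
      unfolding V_Suc_iff by blast
    have "Fract (a * x) 1 = sum_list (map (\<lambda>x. Fract x 1) xs)" using h(5) emb_sum_list by metis
    moreover have "sum_list (map (\<lambda>x. Fract x 1) xs) = 0 \<or> unit_in B (sum_list (map (\<lambda>x. Fract x 1) xs))"
      by (rule sum_units[OF sr B(2)]) (use h(3,4) Suc.IH in auto)
    moreover have "Fract (a * x) 1 \<noteq> 0" using h(2) emb_eq0 by blast
    ultimately have "unit_in B (Fract (a * x) 1)" by auto
    then obtain w where w: "w \<in> B" "Fract a 1 * Fract x 1 * w = 1" unfolding unit_in_def by auto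
    have "Fract x 1 * (Fract a 1 * w) = 1" using w(2) by (simp add: ac_simps)
    moreover have "Fract a 1 * w \<in> B" using mulB emb w(1) by blast
    ultimately show "unit_in B (Fract x 1)" unfolding unit_in_def using emb by blast
  qed
  show ?thesis
  proof (rule set_eqI, rule iffI)
    fix q :: "'a fract" show "q \<in> B"
    proof (cases q)
      case (Fract p r)
      then have "r \<in> Uset" using U by auto
      then obtain i where "r \<in> Vset i" unfolding U_iff by blast
      then obtain w where w: "w \<in> B" "Fract r 1 * w = 1" using V unfolding unit_in_def by blast
      have "q = q * (Fract r 1 * w)" using w by simp
      also have "\<dots> = (q * Fract r 1) * w" by (simp add: ac_simps)
      also have "q * Fract r 1 = Fract p 1"
        using Fract mult_fract_cancel[of r p 1] by (simp add: ac_simps)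
      finally have "q = Fract p 1 * w" .
      then show ?thesis using mulB emb w(1) by simp
    qed
  qed simp
qed

lemma loc_overring: "overring (loc (Uset :: 'a::idom set))"
  unfolding overring_def subring_def add_subgroup_def
proof (intro conjI ballI)
  show "1 \<in> loc (Uset :: 'a set)" unfolding loc_def One_fract_def using U_unit[of "1::'a"] by auto
  show "0 \<in> loc (Uset :: 'a set)" unfolding loc_def Zero_fract_def using U_unit[of "1::'a"] by auto
  show "range (\<lambda>a. Fract a 1) \<subseteq> loc (Uset :: 'a set)" unfolding loc_def using U_unit[of "1::'a"] by auto
next
  fix x y :: "'a fract" assume "x \<in> loc Uset" "y \<in> loc Uset"
  then obtain a s b t where h: "x = Fract a s" "s \<in> Uset" "y = Fract b t" "t \<in> Uset" unfolding loc_def by auto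
  have nz: "s \<noteq> 0" "t \<noteq> 0" using h U_nz by auto
  show "x + y \<in> loc Uset" unfolding loc_def using h nz U_mult[of s t] by auto
  show "x * y \<in> loc Uset" unfolding loc_def using h nz U_mult[of s t] by auto
next
  fix x :: "'a fract" assume "x \<in> loc Uset"
  then show "- x \<in> loc Uset" unfolding loc_def by force
qed

lemma loc_unit:
  assumes "unit_in (loc (Uset :: 'a::idom set)) u"
  shows "\<exists>a s. u = Fract a s \<and> a \<in> Uset \<and> s \<in> Uset"
proof -
  obtain a s b t where h: "u = Fract a s" "s \<in> Uset" "t \<in> Uset" "Fract a s * Fract b t = 1"
    using assms unfolding unit_in_def loc_def by auto
  have nz: "s \<noteq> 0" "t \<noteq> 0" using h U_nz by auto
  have "Fract (a * b) (s * t) = Fract 1 1" using h(4) by (simp add: One_fract_def)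
  then have e: "a * b = s * t" using nz by (simp add: eq_fract)
  then have "b * a \<in> Uset" using U_mult[OF h(2,3)] by (simp add: mult.commute)
  moreover have "b \<noteq> 0" using e nz by auto
  ultimately have "a \<in> Uset" using U_sat by blast
  then show ?thesis using h by blast
qed

lemma loc_ua: "unit_additive (loc (Uset :: 'a::idom set))"
  unfolding unit_additive_def
proof (intro allI impI)
  fix u v :: "'a fract"
  assume uv: "unit_in (loc Uset) u \<and> unit_in (loc Uset) v"
  obtain a s where h1: "u = Fract a s" "a \<in> Uset" "s \<in> Uset"
    using loc_unit uv by blast
  obtain b t where h2: "v = Fract b t" "b \<in> Uset" "t \<in> Uset"
    using loc_unit uv by blast
  note h = h1 h2
  have nz: "s \<noteq> 0" "t \<noteq> 0" using h U_nz by auto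
  have sum: "u + v = Fract (a * t + b * s) (s * t)" using h nz by simp
  show "unit_in (loc Uset) (u + v) \<or> (\<exists>n. (u + v) ^ n = 0)"
  proof (cases "a * t + b * s = 0")
    case True
    then have "(u + v) ^ 1 = 0" using sum by (simp add: Zero_fract_def eq_fract)
    then show ?thesis by blast
  next
    case False
    have st: "s * t \<in> Uset" using U_mult[of s t] h by simp
    have "a * t \<in> Uset" "b * s \<in> Uset" using U_mult[of a t] U_mult[of b s] h by simp_all
    then have c: "a * t + b * s \<in> Uset" using False by (rule U_add)
    have "u + v \<in> loc Uset" unfolding loc_def using sum st by blast
    moreover have "Fract (s * t) (a * t + b * s) \<in> loc Uset" unfolding loc_def using c by blast
    moreover have "(u + v) * Fract (s * t) (a * t + b * s) = 1"
      using sum False nz by (simp add: One_fract_def eq_fract)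
    ultimately show ?thesis unfolding unit_in_def by blast
  qed
qed

lemma bwd:
  assumes "\<forall>B :: 'a::idom fract set. overring B \<and> unit_additive B \<longrightarrow> B = UNIV"
  shows "Uset \<union> {0::'a} = UNIV"
proof -
  have L: "loc (Uset :: 'a set) = UNIV" using assms loc_overring[where 'a='a] loc_ua[where 'a='a] by simp
  have "a \<in> Uset" if a: "a \<noteq> 0" for a :: 'a
  proof -
    have "Fract 1 a \<in> loc Uset" using L by simp
    then obtain p s where h: "Fract 1 a = Fract p s" "s \<in> Uset" unfolding loc_def by auto
    have s0: "s \<noteq> 0" using h U_nz by auto
    then have e: "s = p * a" using h a by (simp add: eq_fract)
    then have "p \<noteq> 0" using s0 by auto
    then show ?thesis using U_sat[of p a] e h(2) by simp
  qed
  then show ?thesis by auto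
qed

theorem theorem9p8:
  shows "bracket1 (reg :: 'a::idom set) = bracket1 (- {0 :: 'a})
    \<and> bracket1 (- {0 :: 'a}) = ring_gen (Uset :: 'a set)
    \<and> ring_gen (Uset :: 'a set) = Uset \<union> {0}
    \<and> (ua_closure :: 'a fract set) = loc (bracket1 (reg :: 'a set) - {0})
    \<and> (bracket1 (reg :: 'a set) = UNIV \<longleftrightarrow>
         (\<forall>B :: 'a fract set. overring B \<and> unit_additive B \<longrightarrow> B = UNIV))"
proof -
  have b: "bracket1 (reg :: 'a set) = Uset \<union> {0}" by (simp add: reg_eq bracket_eq)
  show ?thesis
  proof (intro conjI)
    show "bracket1 (reg :: 'a set) = bracket1 (- {0 :: 'a})" by (simp add: reg_eq)
    show "bracket1 (- {0 :: 'a}) = ring_gen (Uset :: 'a set)" by (simp add: bracket_eq ring_gen_eq)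
    show "ring_gen (Uset :: 'a set) = Uset \<union> {0}" by (rule ring_gen_eq)
    show "(ua_closure :: 'a fract set) = loc (bracket1 (reg :: 'a set) - {0})" by (rule ua_eq)
    show "(bracket1 (reg :: 'a set) = UNIV \<longleftrightarrow>
         (\<forall>B :: 'a fract set. overring B \<and> unit_additive B \<longrightarrow> B = UNIV))"
      unfolding b
    proof
      assume "Uset \<union> {0} = (UNIV :: 'a set)"
      then show "\<forall>B :: 'a fract set. overring B \<and> unit_additive B \<longrightarrow> B = UNIV"
        using fwd by blast
    next
      assume "\<forall>B :: 'a fract set. overring B \<and> unit_additive B \<longrightarrow> B = UNIV"
      then show "Uset \<union> {0} = (UNIV :: 'a set)" by (rule bwd)
    qed
  qed
qed

end
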